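(* If $\alpha,\beta\in\Omega$ are the critical itineraries of an overlapping function, i.e. there exist $a\in(1,2]$ and $p\in[1-1/a,1/a]$ with $\alpha=\tau_{(a,p,-)}(p)$ and $\beta=\tau_{(a,p,+)}(p)$, then $(\alpha,\beta)$ is an admissible, non-null pair.
   Context: For $1<a\le 2$ and $1-\frac1a\le p\le\frac1a$: $f_{(a,p,-)}(x)=ax$ if $x\le p$, $ax+(1-a)$ if $x>p$; $f_{(a,p,+)}(x)=ax$ if $x<p$, $ax+(1-a)$ if $x\ge p$, on $[0,1]$. $\Omega=\{0,1\}^{\infty}$ is the set of infinite binary strings $\omega_0\omega_1\cdots$. For $f_{(a,p,-)}$ let $I_0=[0,p]$, $I_1=(p,1]$; for $f_{(a,p,+)}$ let $I_0=[0,p)$, $I_1=[p,1]$. The itinerary $\tau_{(a,p,\pm)}(x)=\omega$ has $\omega_n=0$ if $f_{(a,p,\pm)}^n(x)\in I_0$ and $\omega_n=1$ if it lies in $I_1$. $S$ is the left shift on $\Omega$, $\preceq$ the lexicographic order, with intervals $[\alpha,\beta]=\{\omega:\alpha\preceq\omega\preceq\beta\}$ etc. A pair $(\alpha,\beta)$ is admissible if $\alpha_0=0,\alpha_1=1,\beta_0=1,\beta_1=0$, and $S^n\alpha\notin(\alpha,\beta]$, $S^n\beta\notin[\alpha,\beta)$ for all $n\ge0$. Then $\Omega_{(\alpha,\beta,-)}=\{\omega:S^n\omega\notin(\alpha,\beta]\ \forall n\ge 0\}$, $\Omega_{(\alpha,\beta,+)}=\{\omega:S^n\omega\notin[\alpha,\beta)\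 \forall n\ge 0\}$, $\Omega_{(\alpha,\beta)}$ their union. For $\Gamma\subseteq\Omega$, $\Gamma_n=\{\omega_0\cdots\omega_n:\omega\in\Gamma\}$ and $h(\Gamma)=\limsup_n\frac1n\ln|\Gamma_n|$. The admissible pair is null if $h(\Omega_{(\alpha,\beta)})=0$, non-null otherwise. *)

theory Defs
  imports "HOL-Analysis.Analysis"
begin

definition Omega :: "(nat \<Rightarrow> nat) set" where
  "Omega = {\<omega>. \<forall>n. \<omega> n \<in> {0, 1}}"

definition f_minus :: "real \<Rightarrow> real \<Rightarrow> real \<Rightarrow> real" where
  "f_minus a p x = (if x \<le> p then a * x else a * x + (1 - a))"

definition f_plus :: "real \<Rightarrow> real \<Rightarrow> real \<Rightarrow> real" where
  "f_plus a p x = (if x < p then a * x else a * x + (1 - a))"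

definition itin_minus :: "real \<Rightarrow> real \<Rightarrow> real \<Rightarrow> nat \<Rightarrow> nat" where
  "itin_minus a p x n = (let y = (f_minus a p ^^ n) x in
      if 0 \<le> y \<and> y \<le> p then 0 else if p < y \<and> y \<le> 1 then 1 else undefined)"

definition itin_plus :: "real \<Rightarrow> real \<Rightarrow> real \<Rightarrow> nat \<Rightarrow> nat" where
  "itin_plus a p x n = (let y = (f_plus a p ^^ n) x in
      if 0 \<le> y \<and> y < p then 0 else if p \<le> y \<and> y \<le> 1 then 1 else undefined)"

definition shift :: "(nat \<Rightarrow> nat) \<Rightarrow> nat \<Rightarrow> nat" where
  "shift \<omega> = (\<lambda>n. \<omega> (Suc n))"

definition lex_less :: "(nat \<Rightarrow> nat) \<Rightarrow> (nat \<Rightarrow> nat) \<Rightarrow> bool" where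
  "lex_less \<omega> \<eta> = (\<exists>n. (\<forall>k<n. \<omega> k = \<eta> k) \<and> \<omega> n < \<eta> n)"

definition lex_le :: "(nat \<Rightarrow> nat) \<Rightarrow> (nat \<Rightarrow> nat) \<Rightarrow> bool" where
  "lex_le \<omega> \<eta> = (lex_less \<omega> \<eta> \<or> \<omega> = \<eta>)"

definition ival_oc :: "(nat \<Rightarrow> nat) \<Rightarrow> (nat \<Rightarrow> nat) \<Rightarrow> (nat \<Rightarrow> nat) set" where
  "ival_oc \<alpha> \<beta> = {\<omega> \<in> Omega. lex_less \<alpha> \<omega> \<and> lex_le \<omega> \<beta>}"

definition ival_co :: "(nat \<Rightarrow> nat) \<Rightarrow> (nat \<Rightarrow> nat) \<Rightarrow> (nat \<Rightarrow> nat) set" where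
  "ival_co \<alpha> \<beta> = {\<omega> \<in> Omega. lex_le \<alpha> \<omega> \<and> lex_less \<omega> \<beta>}"

definition admissible :: "(nat \<Rightarrow> nat) \<Rightarrow> (nat \<Rightarrow> nat) \<Rightarrow> bool" where
  "admissible \<alpha> \<beta> = (\<alpha> \<in> Omega \<and> \<beta> \<in> Omega \<and>
     \<alpha> 0 = 0 \<and> \<alpha> 1 = 1 \<and> \<beta> 0 = 1 \<and> \<beta> 1 = 0 \<and>
     (\<forall>n. (shift ^^ n) \<alpha> \<notin> ival_oc \<alpha> \<beta>) \<and>
     (\<forall>n. (shift ^^ n) \<beta> \<notin> ival_co \<alpha> \<beta>))"

definition Omega_minus :: "(nat \<Rightarrow> nat) \<Rightarrow> (nat \<Rightarrow> nat) \<Rightarrow> (nat \<Rightarrow> nat) set" where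
  "Omega_minus \<alpha> \<beta> = {\<omega> \<in> Omega. \<forall>n. (shift ^^ n) \<omega> \<notin> ival_oc \<alpha> \<beta>}"

definition Omega_plus :: "(nat \<Rightarrow> nat) \<Rightarrow> (nat \<Rightarrow> nat) \<Rightarrow> (nat \<Rightarrow> nat) set" where
  "Omega_plus \<alpha> \<beta> = {\<omega> \<in> Omega. \<forall>n. (shift ^^ n) \<omega> \<notin> ival_co \<alpha> \<beta>}"

definition Omega_ab :: "(nat \<Rightarrow> nat) \<Rightarrow> (nat \<Rightarrow> nat) \<Rightarrow> (nat \<Rightarrow> nat) set" where
  "Omega_ab \<alpha> \<beta> = Omega_minus \<alpha> \<beta> \<union> Omega_plus \<alpha> \<beta>"

definition words :: "(nat \<Rightarrow> nat) set \<Rightarrow> nat \<Rightarrow> nat list set" where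
  "words \<Gamma> n = (\<lambda>\<omega>. map \<omega> [0..<Suc n]) ` \<Gamma>"

definition entropy :: "(nat \<Rightarrow> nat) set \<Rightarrow> ereal" where
  "entropy \<Gamma> = limsup (\<lambda>n. ereal (ln (real (card (words \<Gamma> n))) / real n))"

definition null_pair :: "(nat \<Rightarrow> nat) \<Rightarrow> (nat \<Rightarrow> nat) \<Rightarrow> bool" where
  "null_pair \<alpha> \<beta> = (entropy (Omega_ab \<alpha> \<beta>) = 0)"

end

theory Submission
  imports Defs
begin

lemma diff_grow:
  fixes u v :: "nat \<Rightarrow> real" and su sv :: "nat \<Rightarrow> nat"
  assumes "\<And>n. su n = sv n \<Longrightarrow> v (Suc n) - u (Suc n) = a * (v n - u n)"
  shows "(\<forall>k<n. su k = sv k) \<Longrightarrow> v n - u n = a ^ n * (v 0 - u 0)"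
proof (induction n)
  case 0 then show ?case by simp
next
  case (Suc n)
  then have "v n - u n = a ^ n * (v 0 - u 0)" by auto
  moreover have "su n = sv n" using Suc.prems by auto
  ultimately show ?case using assms by simp
qed

lemma lex_grow:
  fixes u v :: "nat \<Rightarrow> real" and su sv :: "nat \<Rightarrow> nat"
  assumes rng: "\<And>n. u n \<in> {0..1} \<and> v n \<in> {0..1}"
    and step: "\<And>n. su n = sv n \<Longrightarrow> v (Suc n) - u (Suc n) = a * (v n - u n)"
    and ord: "\<And>n. u n < v n \<Longrightarrow> su n \<le> sv n"
    and st: "u 0 < v 0" and a: "1 < (a::real)"
  shows "lex_less su sv"
proof (rule ccontr)
  assume nl: "\<not> lex_less su sv"
  have all: "\<forall>k<n. su k = sv k" for n
  proof (induction n)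
    case 0 then show ?case by simp
  next
    case (Suc n)
    have "v n - u n = a ^ n * (v 0 - u 0)" using diff_grow[of su sv v u a n, OF step] Suc by blast
    moreover have "a ^ n * (v 0 - u 0) > 0" using a st by simp
    ultimately have "su n \<le> sv n" using ord by simp
    moreover have "\<not> su n < sv n" using nl Suc unfolding lex_less_def by blast
    ultimately have "su n = sv n" by simp
    then show ?case using Suc less_Suc_eq by auto
  qed
  have bnd: "a ^ n * (v 0 - u 0) \<le> 1" for n
  proof -
    have "v n - u n = a ^ n * (v 0 - u 0)" using diff_grow[of su sv v u a n, OF step] all by blast
    moreover have "v n - u n \<le> 1" using rng[of n] by auto
    ultimately show ?thesis by simp
  qed
  obtain n where "1 / (v 0 - u 0) < a ^ n" using real_arch_pow[OF a] by blast
  then have "1 < a ^ n * (v 0 - u 0)" using st by (simp add: field_simps)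
  with bnd[of n] show False by simp
qed

lemma lex_anti: "lex_le \<omega> \<eta> \<Longrightarrow> lex_less \<eta> \<omega> \<Longrightarrow> False"
  unfolding lex_le_def lex_less_def
  by (metis less_irrefl linorder_neqE_nat less_asym')

lemma shift_pow: "(shift ^^ n) \<omega> = (\<lambda>k. \<omega> (k + n))"
  by (induction n) (auto simp: shift_def)

context
  fixes a p :: real
  assumes a1: "1 < a" and a2: "a \<le> 2" and p1: "1 - 1 / a \<le> p" and p2: "p \<le> 1 / a"
begin

lemma p_pos: "0 < p"
proof -
  have "1 / a < 1" using a1 by simp
  then show ?thesis using p1 by simp
qed

lemma p_lt1: "p < 1"
proof -
  have "1 / a < 1" using a1 by simp
  then show ?thesis using p2 by simp
qed

lemma ap_le: "a * p \<le> 1"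
  using p2 a1 by (simp add: field_simps)

lemma ap_ge: "a - 1 \<le> a * p"
  using p1 a1 by (simp add: field_simps)

lemma fm_range: assumes "x \<in> {0..1}" shows "f_minus a p x \<in> {0..1}"
proof (cases "x \<le> p")
  case True
  have h: "a * x \<le> a * p" using True a1 by simp
  have "a * x \<le> 1" using h ap_le by linarith
  moreover have "0 \<le> a * x" using assms a1 by simp
  ultimately show ?thesis using True unfolding f_minus_def by simp
next
  case False
  have "a * p \<le> a * x" "a * x \<le> a" using False a1 assms by auto
  then show ?thesis using False ap_ge unfolding f_minus_def by simp
qed

lemma fp_range: assumes "x \<in> {0..1}" shows "f_plus a p x \<in> {0..1}"
proof (cases "x < p")
  case True
  have h: "a * x \<le> a * p" using True a1 by simp
  have "a * x \<le> 1" using h ap_le by linarith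
  moreover have "0 \<le> a * x" using assms a1 by simp
  ultimately show ?thesis using True unfolding f_plus_def by simp
next
  case False
  have "a * p \<le> a * x" "a * x \<le> a" using False a1 assms by auto
  then show ?thesis using False ap_ge unfolding f_plus_def by simp
qed

lemma fm_iter: "x \<in> {0..1} \<Longrightarrow> (f_minus a p ^^ n) x \<in> {0..1}"
  by (induction n) (auto intro!: fm_range simp del: atLeastAtMost_iff)

lemma fp_iter: "x \<in> {0..1} \<Longrightarrow> (f_plus a p ^^ n) x \<in> {0..1}"
  by (induction n) (auto intro!: fp_range simp del: atLeastAtMost_iff)

lemma im_eq: "x \<in> {0..1} \<Longrightarrow> itin_minus a p x n = (if (f_minus a p ^^ n) x \<le> p then 0 else 1)"
  using fm_iter[of x n] unfolding itin_minus_def Let_def by auto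

lemma ip_eq: "x \<in> {0..1} \<Longrightarrow> itin_plus a p x n = (if (f_plus a p ^^ n) x < p then 0 else 1)"
  using fp_iter[of x n] unfolding itin_plus_def Let_def by auto

lemma shift_im: "(shift ^^ n) (itin_minus a p x) = itin_minus a p ((f_minus a p ^^ n) x)"
  unfolding shift_pow itin_minus_def by (simp add: funpow_add)

lemma shift_ip: "(shift ^^ n) (itin_plus a p x) = itin_plus a p ((f_plus a p ^^ n) x)"
  unfolding shift_pow itin_plus_def by (simp add: funpow_add)

lemma im_Omega: "x \<in> {0..1} \<Longrightarrow> itin_minus a p x \<in> Omega"
  unfolding Omega_def using im_eq by auto

lemma ip_Omega: "x \<in> {0..1} \<Longrightarrow> itin_plus a p x \<in> Omega"
  unfolding Omega_def using ip_eq by auto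

lemma fm_diff:
  assumes "(x \<le> p) = (y \<le> p)"
  shows "f_minus a p y - f_minus a p x = a * (y - x)"
  using assms by (cases "x \<le> p") (simp_all add: f_minus_def algebra_simps)

lemma fp_diff:
  assumes "(x < p) = (y < p)"
  shows "f_plus a p y - f_plus a p x = a * (y - x)"
  using assms by (cases "x < p") (simp_all add: f_plus_def algebra_simps)

lemma fmp_diff:
  assumes "(y < p) = (x \<le> p)"
  shows "f_minus a p x - f_plus a p y = a * (x - y)"
  using assms by (cases "x \<le> p") (simp_all add: f_plus_def f_minus_def algebra_simps)

lemma cmpA:
  assumes "x \<in> {0..1}" "y \<in> {0..1}" "x < y"
  shows "lex_less (itin_minus a p x) (itin_minus a p y)"
proof (rule lex_grow[where u="\<lambda>n. (f_minus a p ^^ n) x" and v="\<lambda>n. (f_minus a p ^^ n) y" and a=a])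
  show "(f_minus a p ^^ n) x \<in> {0..1} \<and> (f_minus a p ^^ n) y \<in> {0..1}" for n
    using fm_iter assms by blast
  show "(f_minus a p ^^ Suc n) y - (f_minus a p ^^ Suc n) x = a * ((f_minus a p ^^ n) y - (f_minus a p ^^ n) x)"
    if "itin_minus a p x n = itin_minus a p y n" for n
  proof -
    have "((f_minus a p ^^ n) x \<le> p) = ((f_minus a p ^^ n) y \<le> p)"
      using that unfolding im_eq[OF assms(1)] im_eq[OF assms(2)] by (auto split: if_splits)
    then show ?thesis using fm_diff by simp
  qed
  show "itin_minus a p x n \<le> itin_minus a p y n" if "(f_minus a p ^^ n) x < (f_minus a p ^^ n) y" for n
    using that im_eq[OF assms(1), of n] im_eq[OF assms(2), of n] by auto
qed (use assms a1 in auto)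

lemma cmpB:
  assumes "x \<in> {0..1}" "y \<in> {0..1}" "x < y"
  shows "lex_less (itin_plus a p x) (itin_plus a p y)"
proof (rule lex_grow[where u="\<lambda>n. (f_plus a p ^^ n) x" and v="\<lambda>n. (f_plus a p ^^ n) y" and a=a])
  show "(f_plus a p ^^ n) x \<in> {0..1} \<and> (f_plus a p ^^ n) y \<in> {0..1}" for n
    using fp_iter assms by blast
  show "(f_plus a p ^^ Suc n) y - (f_plus a p ^^ Suc n) x = a * ((f_plus a p ^^ n) y - (f_plus a p ^^ n) x)"
    if "itin_plus a p x n = itin_plus a p y n" for n
  proof -
    have "((f_plus a p ^^ n) x < p) = ((f_plus a p ^^ n) y < p)"
      using that unfolding ip_eq[OF assms(1)] ip_eq[OF assms(2)] by (auto split: if_splits)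
    then show ?thesis using fp_diff by simp
  qed
  show "itin_plus a p x n \<le> itin_plus a p y n" if "(f_plus a p ^^ n) x < (f_plus a p ^^ n) y" for n
    using that ip_eq[OF assms(1), of n] ip_eq[OF assms(2), of n] by auto
qed (use assms a1 in auto)

lemma cmpC:
  assumes "x \<in> {0..1}" "y \<in> {0..1}" "y < x"
  shows "lex_less (itin_plus a p y) (itin_minus a p x)"
proof (rule lex_grow[where u="\<lambda>n. (f_plus a p ^^ n) y" and v="\<lambda>n. (f_minus a p ^^ n) x" and a=a])
  show "(f_plus a p ^^ n) y \<in> {0..1} \<and> (f_minus a p ^^ n) x \<in> {0..1}" for n
    using fp_iter fm_iter assms by blast
  show "(f_minus a p ^^ Suc n) x - (f_plus a p ^^ Suc n) y = a * ((f_minus a p ^^ n) x - (f_plus a p ^^ n) y)"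
    if "itin_plus a p y n = itin_minus a p x n" for n
  proof -
    have "((f_plus a p ^^ n) y < p) = ((f_minus a p ^^ n) x \<le> p)"
      using that unfolding ip_eq[OF assms(2)] im_eq[OF assms(1)] by (auto split: if_splits)
    then show ?thesis using fmp_diff by simp
  qed
  show "itin_plus a p y n \<le> itin_minus a p x n" if "(f_plus a p ^^ n) y < (f_minus a p ^^ n) x" for n
    using that ip_eq[OF assms(2), of n] im_eq[OF assms(1), of n] by auto
qed (use assms a1 in auto)


lemma p_in: "p \<in> {0..1}" using p_pos p_lt1 by simp

lemma minus_notin:
  assumes x: "x \<in> {0..1}"
  shows "itin_minus a p x \<notin> ival_oc (itin_minus a p p) (itin_plus a p p)"
proof
  assume m: "itin_minus a p x \<in> ival_oc (itin_minus a p p) (itin_plus a p p)"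
  then have l1: "lex_less (itin_minus a p p) (itin_minus a p x)"
    and l2: "lex_le (itin_minus a p x) (itin_plus a p p)" unfolding ival_oc_def by auto
  consider "x = p" | "x < p" | "p < x" by linarith
  then show False
  proof cases
    case 1
    have "lex_le (itin_minus a p p) (itin_minus a p p)" unfolding lex_le_def by simp
    moreover have "lex_less (itin_minus a p p) (itin_minus a p p)" using l1 1 by simp
    ultimately show ?thesis by (rule lex_anti)
  next
    case 2 have "lex_less (itin_minus a p x) (itin_minus a p p)" by (rule cmpA[OF x p_in 2])
    then have "lex_le (itin_minus a p x) (itin_minus a p p)" unfolding lex_le_def by simp
    then show ?thesis using l1 by (rule lex_anti)
  next
    case 3 have "lex_less (itin_plus a p p) (itin_minus a p x)" by (rule cmpC[OF x p_in 3])
    with l2 show ?thesis by (rule lex_anti)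
  qed
qed

lemma plus_notin:
  assumes y: "y \<in> {0..1}"
  shows "itin_plus a p y \<notin> ival_co (itin_minus a p p) (itin_plus a p p)"
proof
  assume m: "itin_plus a p y \<in> ival_co (itin_minus a p p) (itin_plus a p p)"
  then have l1: "lex_le (itin_minus a p p) (itin_plus a p y)"
    and l2: "lex_less (itin_plus a p y) (itin_plus a p p)" unfolding ival_co_def by auto
  consider "y = p" | "y < p" | "p < y" by linarith
  then show False
  proof cases
    case 1
    have "lex_le (itin_plus a p p) (itin_plus a p p)" unfolding lex_le_def by simp
    moreover have "lex_less (itin_plus a p p) (itin_plus a p p)" using l2 1 by simp
    ultimately show ?thesis by (rule lex_anti)
  next
    case 2 have "lex_less (itin_plus a p y) (itin_minus a p p)" by (rule cmpC[OF p_in y 2])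
    with l1 show ?thesis by (rule lex_anti)
  next
    case 3 have "lex_less (itin_plus a p p) (itin_plus a p y)" by (rule cmpB[OF p_in y 3])
    then have "lex_le (itin_plus a p p) (itin_plus a p y)" unfolding lex_le_def by simp
    then show ?thesis using l2 by (rule lex_anti)
  qed
qed

lemma im_in_Omega_minus:
  assumes x: "x \<in> {0..1}"
  shows "itin_minus a p x \<in> Omega_minus (itin_minus a p p) (itin_plus a p p)"
proof -
  have "\<forall>n. (shift ^^ n) (itin_minus a p x) \<notin> ival_oc (itin_minus a p p) (itin_plus a p p)"
  proof
    fix n show "(shift ^^ n) (itin_minus a p x) \<notin> ival_oc (itin_minus a p p) (itin_plus a p p)"
      unfolding shift_im by (rule minus_notin[OF fm_iter[OF x]])
  qed
  then show ?thesis unfolding Omega_minus_def using im_Omega[OF x] by blast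
qed

lemma adm: "admissible (itin_minus a p p) (itin_plus a p p)"
proof -
  have e1: "(f_minus a p ^^ 1) p = a * p" using p_pos by (simp add: f_minus_def)
  have e2: "(f_plus a p ^^ 1) p = a * p + (1 - a)" by (simp add: f_plus_def)
  have "p < a * p" using a1 p_pos by simp
  then have i1: "\<not> a * p \<le> p" by linarith
  have "(a - 1) * p < (a - 1) * 1" using a1 p_lt1 by (intro mult_strict_left_mono) auto
  then have i2: "a * p + (1 - a) < p" by (simp add: algebra_simps)
  have f1: "itin_minus a p p 0 = 0" unfolding im_eq[OF p_in] by simp
  have f2: "itin_minus a p p 1 = 1" unfolding im_eq[OF p_in] e1 using i1 by simp
  have f3: "itin_plus a p p 0 = 1" unfolding ip_eq[OF p_in] by simp
  have f4: "itin_plus a p p 1 = 0" unfolding ip_eq[OF p_in] e2 using i2 by simp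
  have f5: "\<forall>n. (shift ^^ n) (itin_minus a p p) \<notin> ival_oc (itin_minus a p p) (itin_plus a p p)"
  proof
    fix n show "(shift ^^ n) (itin_minus a p p) \<notin> ival_oc (itin_minus a p p) (itin_plus a p p)"
      unfolding shift_im by (rule minus_notin[OF fm_iter[OF p_in]])
  qed
  have f6: "\<forall>n. (shift ^^ n) (itin_plus a p p) \<notin> ival_co (itin_minus a p p) (itin_plus a p p)"
  proof
    fix n show "(shift ^^ n) (itin_plus a p p) \<notin> ival_co (itin_minus a p p) (itin_plus a p p)"
      unfolding shift_ip by (rule plus_notin[OF fp_iter[OF p_in]])
  qed
  have f7: "itin_minus a p p \<in> Omega" by (rule im_Omega[OF p_in])
  have f8: "itin_plus a p p \<in> Omega" by (rule ip_Omega[OF p_in])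
  show ?thesis unfolding admissible_def by (intro conjI f1 f2 f3 f4 f5 f6 f7 f8)
qed

lemma sep:
  assumes x: "x \<in> {0..1}" and y: "y \<in> {0..1}" and xy: "x < y" and big: "1 < a ^ Suc n * (y - x)"
  shows "\<exists>k\<le>n. itin_minus a p x k \<noteq> itin_minus a p y k"
proof (rule ccontr)
  assume "\<not> ?thesis"
  then have all: "\<forall>k<Suc n. itin_minus a p x k = itin_minus a p y k" by (simp add: less_Suc_eq_le)
  define u where "u = (\<lambda>k. (f_minus a p ^^ k) x)"
  define v where "v = (\<lambda>k. (f_minus a p ^^ k) y)"
  have step: "v (Suc k) - u (Suc k) = a * (v k - u k)"
    if "itin_minus a p x k = itin_minus a p y k" for k
  proof -
    have "((f_minus a p ^^ k) x \<le> p) = ((f_minus a p ^^ k) y \<le> p)"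
      using that unfolding im_eq[OF x, of k] im_eq[OF y, of k] by (auto split: if_splits)
    then show ?thesis unfolding u_def v_def using fm_diff by simp
  qed
  have "v (Suc n) - u (Suc n) = a ^ Suc n * (v 0 - u 0)"
    by (rule diff_grow[where su="itin_minus a p x" and sv="itin_minus a p y" and u=u and v=v and a=a, OF step all])
  moreover have "v 0 - u 0 = y - x" unfolding u_def v_def by simp
  moreover have "v (Suc n) - u (Suc n) \<le> 1"
    using fm_iter[OF x, of "Suc n"] fm_iter[OF y, of "Suc n"] unfolding u_def v_def by auto
  ultimately have "a ^ Suc n * (y - x) \<le> 1" by simp
  then show False using big by linarith
qed

lemma words_finite: "\<Gamma> \<subseteq> Omega \<Longrightarrow> finite (words \<Gamma> n)"
proof -
  assume G: "\<Gamma> \<subseteq> Omega"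
  have "words \<Gamma> n \<subseteq> {xs. set xs \<subseteq> {0,1} \<and> length xs = Suc n}"
  proof
    fix w assume "w \<in> words \<Gamma> n"
    then obtain \<omega> where o: "\<omega> \<in> \<Gamma>" "w = map \<omega> [0..<Suc n]" unfolding words_def by auto
    then have "\<forall>k. \<omega> k \<in> {0,1}" using G unfolding Omega_def by auto
    then have "set w \<subseteq> {0,1}"
    proof -
      assume w01: "\<forall>k. \<omega> k \<in> {0,1}"
      show ?thesis
      proof
        fix z assume "z \<in> set w"
        then obtain k where "z = \<omega> k" using o(2) by auto
        then show "z \<in> {0,1}" using w01[rule_format, of k] by simp
      qed
    qed
    then show "w \<in> {xs. set xs \<subseteq> {0,1} \<and> length xs = Suc n}" using o by simp
  qed
  moreover have "finite {xs. set xs \<subseteq> {0::nat,1} \<and> length xs = Suc n}"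
    by (rule finite_lists_length_eq) simp
  ultimately show ?thesis by (rule finite_subset)
qed

lemma card_bound: "a ^ Suc n \<le> real (card (words (Omega_ab (itin_minus a p p) (itin_plus a p p)) n))"
proof -
  define A where "A = a ^ Suc n"
  define m where "m = nat \<lceil>A\<rceil> - 1"
  define g where "g = (\<lambda>k::nat. map (itin_minus a p (real k / real m)) [0..<Suc n])"
  have A1: "1 < A" unfolding A_def by (rule one_less_power[OF a1]) simp
  have cA: "2 \<le> \<lceil>A\<rceil>" using A1 by (simp add: le_ceiling_iff)
  have c1: "A \<le> of_int \<lceil>A\<rceil>" by (rule le_of_int_ceiling)
  have c2: "of_int \<lceil>A\<rceil> - 1 < A" using ceiling_correct[of A] by linarith
  have n2: "2 \<le> nat \<lceil>A\<rceil>" using cA by linarith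
  have rn: "real (nat \<lceil>A\<rceil>) = of_int \<lceil>A\<rceil>" using cA by simp
  have rm: "real m = real (nat \<lceil>A\<rceil>) - 1" unfolding m_def using n2 by (simp add: of_nat_diff)
  have mA: "real m < A" "A \<le> real m + 1" "1 \<le> m"
    using c1 c2 rn rm n2 unfolding m_def by linarith+
  have inj: "g k \<noteq> g l" if kl: "k < l" "l \<le> m" for k l
  proof -
    define x where "x = real k / real m"
    define y where "y = real l / real m"
    have mpos: "0 < real m" using mA by simp
    have x01: "x \<in> {0..1}" "y \<in> {0..1}" using kl mpos unfolding x_def y_def by (auto simp: field_simps)
    have xy: "x < y" using kl mpos unfolding x_def y_def by (simp add: divide_strict_right_mono)
    have yx: "y - x = (real l - real k) / real m" unfolding x_def y_def by (simp add: diff_divide_distrib)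
    have "1 \<le> real l - real k" using kl by simp
    then have "1 / real m \<le> y - x" unfolding yx using mpos by (intro divide_right_mono) auto
    then have "A * (1 / real m) \<le> A * (y - x)" using A1 by (intro mult_left_mono) auto
    moreover have "1 < A * (1 / real m)" using mA mpos by (simp add: field_simps)
    ultimately have "1 < a ^ Suc n * (y - x)" unfolding A_def by simp
    then obtain j where j: "j \<le> n" "itin_minus a p x j \<noteq> itin_minus a p y j"
      using sep[OF x01 xy] by blast
    have "g k ! j = itin_minus a p x j" "g l ! j = itin_minus a p y j"
      using j(1) unfolding g_def x_def y_def by (simp_all add: nth_map less_Suc_eq_le del: upt_Suc)
    then show ?thesis using j(2) by metis
  qed
  have injg: "inj_on g {0..m}"
    unfolding inj_on_def by (metis atLeastAtMost_iff inj linorder_neqE_nat)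
  have sub: "g ` {0..m} \<subseteq> words (Omega_ab (itin_minus a p p) (itin_plus a p p)) n"
  proof
    fix w assume "w \<in> g ` {0..m}"
    then obtain k where k: "k \<le> m" "w = g k" by auto
    have "real k / real m \<in> {0..1}" using k mA by (auto simp: field_simps)
    then have "itin_minus a p (real k / real m) \<in> Omega_ab (itin_minus a p p) (itin_plus a p p)"
      using im_in_Omega_minus unfolding Omega_ab_def by blast
    then show "w \<in> words (Omega_ab (itin_minus a p p) (itin_plus a p p)) n"
      unfolding words_def k g_def by blast
  qed
  have fin: "finite (words (Omega_ab (itin_minus a p p) (itin_plus a p p)) n)"
    by (rule words_finite) (auto simp: Omega_ab_def Omega_minus_def Omega_plus_def)
  have "card (g ` {0..m}) = m + 1" using card_image[OF injg] by simp
  then have "m + 1 \<le> card (words (Omega_ab (itin_minus a p p) (itin_plus a p p)) n)"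
    using card_mono[OF fin sub] by simp
  then show ?thesis using mA unfolding A_def by linarith
qed

lemma entropy_pos: "ereal (ln a) \<le> entropy (Omega_ab (itin_minus a p p) (itin_plus a p p))"
  unfolding entropy_def
proof (rule le_Limsup)
  show "sequentially \<noteq> bot" by simp
  show "\<forall>\<^sub>F n in sequentially. ereal (ln a) \<le> ereal (ln (real (card (words (Omega_ab (itin_minus a p p) (itin_plus a p p)) n))) / real n)"
    unfolding eventually_sequentially
  proof (intro exI allI impI)
    fix n :: nat assume n1: "1 \<le> n"
    let ?c = "real (card (words (Omega_ab (itin_minus a p p) (itin_plus a p p)) n))"
    have cb: "a ^ Suc n \<le> ?c" by (rule card_bound)
    have apos: "0 < a ^ Suc n" using a1 by simp
    have "ln (a ^ Suc n) \<le> ln ?c" using cb apos by simp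
    then have "real (Suc n) * ln a \<le> ln ?c" unfolding ln_realpow .
    moreover have "real n * ln a \<le> real (Suc n) * ln a" using a1 by (intro mult_right_mono) auto
    ultimately have "real n * ln a \<le> ln ?c" by linarith
    then have "ln a \<le> ln ?c / real n" using n1 by (simp add: le_divide_eq mult.commute)
    then show "ereal (ln a) \<le> ereal (ln ?c / real n)" by simp
  qed
qed

end

theorem theorem2:
  fixes a p :: real and \<alpha> \<beta> :: "nat \<Rightarrow> nat"
  assumes "1 < a" "a \<le> 2" "1 - 1 / a \<le> p" "p \<le> 1 / a"
    and "\<alpha> = itin_minus a p p" and "\<beta> = itin_plus a p p"
  shows "admissible \<alpha> \<beta> \<and> \<not> null_pair \<alpha> \<beta>"
proof -
  have "0 < ln a" using assms(1) by simp
  then have "entropy (Omega_ab \<alpha> \<beta>) \<noteq> 0"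
    using entropy_pos[OF assms(1-4)] assms(5,6) by auto
  then show ?thesis using adm[OF assms(1-4)] assms(5,6) unfolding null_pair_def by simp
qed

end
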